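(* Let $k \in \mathbb{N}$, let $G_1, \ldots, G_k$ be ordered graphs, and let $G = G_1 + \ldots + G_k$. Suppose that for each $i \in [k]$ there is an integer $m(i)$ such that $G_i$ has at least two distinct irreducible induced ordered subgraphs on $m(i)$ vertices. Then $S_n(G) \geqslant 2^{n-1}$ for each $n \leqslant k$.
   Context: Ordered graphs of order $n$ have vertex set $[n]$ with the natural order; distinct means non-isomorphic as ordered graphs. A pair of vertices $u<v$ separates the edges of $G$ if every edge $ij$ ($i<j$) has $j\leqslant u$ or $v\leqslant i$; $G$ is irreducible if no pair separates its edges. For ordered graphs $G_1,\dots,G_k$, $G_1+\dots+G_k$ is the ordered graph obtained by placing copies of $G_1,\dots,G_k$ consecutively from left to right with no edges between different copies. $S_n(G)$ is the number of distinct induced ordered subgraphs of $G$ of order $n$. *)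

theory Defs
  imports Complex_Main
begin

text \<open>An ordered graph of order n on vertex set {1..n} with the natural order is
  represented by the pair (n, E), where E is a set of pairs (i,j) with 1 <= i < j <= n
  (edge ij with i<j). Two ordered graphs are isomorphic as ordered graphs iff they are
  equal in this representation (the only order-preserving bijection is the identity).\<close>

type_synonym ograph = "nat \<times> (nat \<times> nat) set"

definition ord_graph :: "ograph \<Rightarrow> bool" where
  "ord_graph G \<longleftrightarrow> snd G \<subseteq> {(i, j). 1 \<le> i \<and> i < j \<and> j \<le> fst G}"

definition induced_sub :: "ograph \<Rightarrow> nat set \<Rightarrow> ograph" where
  "induced_sub G S =
     (let f = (\<lambda>a. sorted_list_of_set S ! (a - 1))
      in (card S, {(a, b). 1 \<le> a \<and> a < b \<and> b \<le> card S \<and> (f a, f b) \<in> snd G}))"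

definition induced_subs :: "ograph \<Rightarrow> nat \<Rightarrow> ograph set" where
  "induced_subs G m = {induced_sub G S | S. S \<subseteq> {1..fst G} \<and> card S = m}"

definition S_num :: "nat \<Rightarrow> ograph \<Rightarrow> nat" where
  "S_num m G = card (induced_subs G m)"

definition separates :: "ograph \<Rightarrow> nat \<Rightarrow> nat \<Rightarrow> bool" where
  "separates G u v \<longleftrightarrow> (\<forall>(i, j) \<in> snd G. j \<le> u \<or> v \<le> i)"

definition irreducible_og :: "ograph \<Rightarrow> bool" where
  "irreducible_og G \<longleftrightarrow>
     \<not> (\<exists>u v. 1 \<le> u \<and> u < v \<and> v \<le> fst G \<and> separates G u v)"

definition osum :: "ograph \<Rightarrow> ograph \<Rightarrow> ograph" where
  "osum G H = (fst G + fst H,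
     snd G \<union> {(i + fst G, j + fst G) | i j. (i, j) \<in> snd H})"

definition osum_list :: "ograph list \<Rightarrow> ograph" where
  "osum_list Gs = foldr osum Gs (0, {})"

end

theory Submission
  imports Defs
begin

definition emb :: "ograph \<Rightarrow> (nat \<Rightarrow> nat) \<Rightarrow> nat \<Rightarrow> ograph" where
  "emb G f m = (m, {(a,b). 1 \<le> a \<and> a < b \<and> b \<le> m \<and> (f a, f b) \<in> snd G})"

definition okf :: "nat \<Rightarrow> (nat \<Rightarrow> nat) \<Rightarrow> nat \<Rightarrow> bool" where
  "okf N f m \<longleftrightarrow> (\<forall>a b. 1 \<le> a \<longrightarrow> a < b \<longrightarrow> b \<le> m \<longrightarrow> f a < f b) \<and>
     (\<forall>a. 1 \<le> a \<longrightarrow> a \<le> m \<longrightarrow> 1 \<le> f a \<and> f a \<le> N)"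

lemma subs_char1:
  assumes "H \<in> induced_subs G m"
  shows "\<exists>f. okf (fst G) f m \<and> H = emb G f m"
proof -
  obtain S where S: "S \<subseteq> {1..fst G}" "card S = m" "H = induced_sub G S"
    using assms unfolding induced_subs_def by blast
  have fin: "finite S" using S(1) finite_subset by blast
  define xs where "xs = sorted_list_of_set S"
  have len: "length xs = m" using S(2) fin by (simp add: xs_def)
  have sw: "sorted_wrt (<) xs" by (simp add: xs_def)
  have st: "set xs = S" using fin by (simp add: xs_def)
  define f where "f = (\<lambda>a. xs ! (a - 1))"
  have "okf (fst G) f m"
    unfolding okf_def
  proof (intro conjI allI impI)
    fix a b :: nat assume "1 \<le> a" "a < b" "b \<le> m"
    then show "f a < f b" unfolding f_def using sw len
      by (simp add: sorted_wrt_iff_nth_less)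
  next
    fix a :: nat assume "1 \<le> a" "a \<le> m"
    then have "f a \<in> S" unfolding f_def using len st by (metis diff_less le_eq_less_or_eq less_le_trans nth_mem zero_less_one)
    then show "1 \<le> f a" "f a \<le> fst G" using S(1) by auto
  qed
  moreover have "H = emb G f m"
    unfolding S(3) induced_sub_def emb_def f_def xs_def Let_def S(2) by simp
  ultimately show ?thesis by blast
qed

lemma subs_char2:
  assumes "okf (fst G) f m"
  shows "emb G f m \<in> induced_subs G m"
proof -
  define xs where "xs = map f [1..<Suc m]"
  have sw: "sorted_wrt (<) xs"
    unfolding xs_def sorted_wrt_iff_nth_less using assms unfolding okf_def
    by (simp del: upt_Suc add: nth_upt)
  have dist: "distinct xs" using sw strict_sorted_iff by blast
  define S where "S = set xs"
  have len: "length xs = m" by (simp add: xs_def)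
  have card: "card S = m" using distinct_card[OF dist] len S_def by simp
  have sub: "S \<subseteq> {1..fst G}" using assms unfolding okf_def S_def xs_def by auto
  have sl: "sorted_list_of_set S = xs"
    using sorted_list_of_set_unique[of S xs] sw card len S_def by simp
  have nth: "xs ! (a - 1) = f a" if "1 \<le> a" "a \<le> m" for a
    using that unfolding xs_def by (simp del: upt_Suc add: nth_upt)
  have "induced_sub G S = emb G f m"
    unfolding induced_sub_def emb_def Let_def card sl
    using nth by (auto intro!: set_eqI) 
  then show ?thesis unfolding induced_subs_def using sub card by (metis (mono_tags, lifting) mem_Collect_eq)
qed

lemma subs_char:
  "H \<in> induced_subs G m \<longleftrightarrow> (\<exists>f. okf (fst G) f m \<and> H = emb G f m)"
  using subs_char1 subs_char2 by blast

lemma emb_fst[simp]: "fst (emb G f m) = m" by (simp add: emb_def)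

lemma emb_ord: "ord_graph (emb G f m)"
  unfolding ord_graph_def emb_def by auto

lemma subs_ord: "H \<in> induced_subs G m \<Longrightarrow> ord_graph H \<and> fst H = m"
  using subs_char emb_ord by fastforce

lemma subs_trans:
  assumes "H \<in> induced_subs G a" "K \<in> induced_subs H b"
  shows "K \<in> induced_subs G b"
proof -
  obtain f where f: "okf (fst G) f a" "H = emb G f a" using assms(1) subs_char by blast
  obtain g where g: "okf (fst H) g b" "K = emb H g b" using assms(2) subs_char by blast
  have fH: "fst H = a" using f(2) by simp
  have ok: "okf (fst G) (f \<circ> g) b" using f(1) g(1) fH unfolding okf_def by auto
  have "K = emb G (f \<circ> g) b"
    unfolding g(2) f(2) emb_def using g(1) fH unfolding okf_def by (auto intro!: set_eqI)
  then show ?thesis using ok subs_char by blast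
qed

lemma subs_refl:
  assumes "ord_graph H" shows "H \<in> induced_subs H (fst H)"
proof -
  have "okf (fst H) id (fst H)" unfolding okf_def by auto
  moreover have "emb H id (fst H) = H"
    using assms unfolding emb_def ord_graph_def by (cases H) auto
  ultimately show ?thesis using subs_char by metis
qed

lemma irr_char:
  "irreducible_og G \<longleftrightarrow> (\<forall>u. 1 \<le> u \<and> u < fst G \<longrightarrow> (\<exists>(i,j)\<in>snd G. i \<le> u \<and> u < j))"
proof
  assume H: "irreducible_og G"
  show "\<forall>u. 1 \<le> u \<and> u < fst G \<longrightarrow> (\<exists>(i,j)\<in>snd G. i \<le> u \<and> u < j)"
  proof (intro allI impI)
    fix u assume u: "1 \<le> u \<and> u < fst G"
    show "\<exists>(i,j)\<in>snd G. i \<le> u \<and> u < j"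
    proof (rule ccontr)
      assume "\<not> ?thesis"
      then have "separates G u (Suc u)" unfolding separates_def by fastforce
      then show False using H u unfolding irreducible_og_def by auto
    qed
  qed
next
  assume H: "\<forall>u. 1 \<le> u \<and> u < fst G \<longrightarrow> (\<exists>(i,j)\<in>snd G. i \<le> u \<and> u < j)"
  show "irreducible_og G"
    unfolding irreducible_og_def
  proof
    assume "\<exists>u v. 1 \<le> u \<and> u < v \<and> v \<le> fst G \<and> separates G u v"
    then obtain u v where uv: "1 \<le> u" "u < v" "v \<le> fst G" "separates G u v" by blast
    then obtain i j where "(i,j) \<in> snd G" "i \<le> u" "u < j" using H by fastforce
    then show False using uv unfolding separates_def by fastforce
  qed
qed

definition fv :: "nat \<Rightarrow> nat \<Rightarrow> nat" where "fv v a = (if a < v then a else Suc a)"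

lemma del_irr:
  assumes og: "ord_graph H" and N: "fst H = Suc m" and v: "1 \<le> v" "v \<le> Suc m"
    and cov: "\<forall>u. 1 \<le> u \<and> u < m \<longrightarrow>
       (\<exists>(i,j)\<in>snd H. i \<noteq> v \<and> j \<noteq> v \<and> i \<le> fv v u \<and> fv v (Suc u) \<le> j)"
  shows "irreducible_og (emb H (fv v) m) \<and> emb H (fv v) m \<in> induced_subs H m"
proof
  have "okf (fst H) (fv v) m" using N v unfolding okf_def fv_def by auto
  then show "emb H (fv v) m \<in> induced_subs H m" using subs_char by blast
next
  define gv where "gv x = (if x < v then x else x - 1)" for x
  show "irreducible_og (emb H (fv v) m)"
    unfolding irr_char emb_fst
  proof (intro allI impI)
    fix u assume u: "1 \<le> u \<and> u < m"
    then obtain i j where ij: "(i,j) \<in> snd H" "i \<noteq> v" "j \<noteq> v" "i \<le> fv v u" "fv v (Suc u) \<le> j"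
      using cov by blast
    have r: "1 \<le> i" "i < j" "j \<le> Suc m" using ij(1) og N unfolding ord_graph_def by auto
    have "fv v (gv i) = i" "fv v (gv j) = j" using ij(2,3) unfolding fv_def gv_def by auto
    moreover have "1 \<le> gv i" "gv i < gv j" "gv j \<le> m" "gv i \<le> u" "u < gv j"
      using r ij(2-5) v u unfolding gv_def fv_def by (auto split: if_splits)
    ultimately have "(gv i, gv j) \<in> snd (emb H (fv v) m)" "gv i \<le> u" "u < gv j"
      using ij(1) unfolding emb_def by auto
    then show "\<exists>(i,j)\<in>snd (emb H (fv v) m). i \<le> u \<and> u < j" by blast
  qed
qed

definition covers :: "nat \<Rightarrow> (nat \<times> nat) set \<Rightarrow> bool" where
  "covers N C \<longleftrightarrow> (\<forall>u. 1 \<le> u \<and> u < N \<longrightarrow> (\<exists>(i,j)\<in>C. i \<le> u \<and> u < j))"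

lemma del_lemma:
  assumes og: "ord_graph H" and irr: "irreducible_og H" and N: "fst H = Suc m"
  shows "\<exists>K\<in>induced_subs H m. irreducible_og K"
proof -
  have finH: "finite (snd H)"
    using og unfolding ord_graph_def
    by (rule finite_subset) (auto intro: finite_subset[of _ "{1..fst H} \<times> {1..fst H}"])
  have cH: "covers (Suc m) (snd H)" using irr N unfolding irr_char covers_def by simp
  obtain C where C: "C \<subseteq> snd H" "covers (Suc m) C"
    and Cmin: "\<And>C'. C' \<subseteq> snd H \<and> covers (Suc m) C' \<Longrightarrow> card C \<le> card C'"
    using ex_has_least_nat[of "\<lambda>C. C \<subseteq> snd H \<and> covers (Suc m) C" "snd H" card] cH by blast
  have finC: "finite C" using C(1) finH finite_subset by blast
  have priv: "\<exists>w. 1 \<le> w \<and> w < Suc m \<and> i \<le> w \<and> w < j \<and>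
      \<not> (\<exists>(i',j')\<in>C - {(i,j)}. i' \<le> w \<and> w < j')" if e: "(i,j) \<in> C" for i j
  proof -
    have "card (C - {(i,j)}) < card C" using e finC by (meson card_Diff1_less)
    then have "\<not> covers (Suc m) (C - {(i,j)})" using Cmin[of "C - {(i,j)}"] C(1) by auto
    then obtain w where w: "1 \<le> w" "w < Suc m" "\<not> (\<exists>(i',j')\<in>C - {(i,j)}. i' \<le> w \<and> w < j')"
      unfolding covers_def by blast
    then obtain i' j' where "(i',j') \<in> C" "i' \<le> w" "w < j'" using C(2) unfolding covers_def by blast
    then show ?thesis using w by blast
  qed
  have rng: "1 \<le> i \<and> i < j \<and> j \<le> Suc m" if "(i,j) \<in> C" for i j
    using that C(1) og N unfolding ord_graph_def by auto
  show ?thesis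
  proof (cases "\<exists>v. 1 \<le> v \<and> v \<le> Suc m \<and> (\<forall>(i,j)\<in>C. i \<noteq> v \<and> j \<noteq> v)")
    case True
    then obtain v where v: "1 \<le> v" "v \<le> Suc m" "\<forall>(i,j)\<in>C. i \<noteq> v \<and> j \<noteq> v" by blast
    have "\<forall>u. 1 \<le> u \<and> u < m \<longrightarrow>
       (\<exists>(i,j)\<in>snd H. i \<noteq> v \<and> j \<noteq> v \<and> i \<le> fv v u \<and> fv v (Suc u) \<le> j)"
    proof (intro allI impI)
      fix u assume u: "1 \<le> u \<and> u < m"
      define x where "x = fv v (Suc u) - 1"
      have "1 \<le> x" "x < Suc m" using u unfolding x_def fv_def by auto
      then obtain i j where ij: "(i,j) \<in> C" "i \<le> x" "x < j" using C(2) unfolding covers_def by blast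
      have "i \<noteq> v" "j \<noteq> v" using v(3) ij(1) by auto
      then have "i \<le> fv v u \<and> fv v (Suc u) \<le> j" using ij(2,3) unfolding x_def fv_def
        by (auto split: if_splits)
      then show "\<exists>(i,j)\<in>snd H. i \<noteq> v \<and> j \<noteq> v \<and> i \<le> fv v u \<and> fv v (Suc u) \<le> j"
        using ij(1) C(1) \<open>i \<noteq> v\<close> \<open>j \<noteq> v\<close> by blast
    qed
    then show ?thesis using del_irr[OF og N v(1,2)] by blast
  next
    case False
    then have endp: "\<And>v. 1 \<le> v \<Longrightarrow> v \<le> Suc m \<Longrightarrow> \<exists>(i,j)\<in>C. i = v \<or> j = v" by blast
    have "\<forall>u. 1 \<le> u \<and> u < m \<longrightarrow>
       (\<exists>(i,j)\<in>snd H. i \<noteq> Suc m \<and> j \<noteq> Suc m \<and> i \<le> fv (Suc m) u \<and> fv (Suc m) (Suc u) \<le> j)"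
    proof (intro allI impI)
      fix u assume u: "1 \<le> u \<and> u < m"
      show "\<exists>(i,j)\<in>snd H. i \<noteq> Suc m \<and> j \<noteq> Suc m \<and> i \<le> fv (Suc m) u \<and> fv (Suc m) (Suc u) \<le> j"
      proof (rule ccontr)
        assume neg: "\<not> ?thesis"
        have neg': "\<And>i j. (i,j) \<in> C \<Longrightarrow> i \<le> u \<Longrightarrow> Suc u \<le> j \<Longrightarrow> j = Suc m"
        proof -
          fix i j assume "(i,j) \<in> C" "i \<le> u" "Suc u \<le> j"
          then show "j = Suc m" using neg C(1) u unfolding fv_def by fastforce
        qed
        obtain a j1 where a: "(a,j1) \<in> C" "a \<le> u" "u < j1" using C(2) u unfolding covers_def by fastforce
        then have j1: "j1 = Suc m" using neg' by auto
        obtain i j where ij: "(i,j) \<in> C" "i = m \<or> j = m" using endp[of m] u by auto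
        have r: "1 \<le> i" "i < j" "j \<le> Suc m" using rng[OF ij(1)] by auto
        show False
        proof (cases "i = m")
          case True
          then have "j = Suc m" using r by auto
          obtain w where w: "1 \<le> w" "w < Suc m" "i \<le> w" "w < j"
            "\<not> (\<exists>(i',j')\<in>C - {(i,j)}. i' \<le> w \<and> w < j')" using priv[OF ij(1)] by blast
          have "w = m" using w True by auto
          moreover have "(a, j1) \<in> C - {(i,j)}" using a u True by auto
          moreover have "a \<le> w \<and> w < j1" using \<open>w = m\<close> a j1 u by auto
          ultimately show False using w(5) by blast
        next
          case False
          then have jm: "j = m" using ij(2) by auto
          show False
          proof (cases "i \<le> u")
            case True
            have "m = Suc m" using neg'[of i m] True ij(1) jm u by auto
            then show False by simp
          next
            case False
            obtain w where w: "1 \<le> w" "w < Suc m" "i \<le> w" "w < j"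
              "\<not> (\<exists>(i',j')\<in>C - {(i,j)}. i' \<le> w \<and> w < j')" using priv[OF ij(1)] by blast
            have "(a, j1) \<in> C - {(i,j)}" using a j1 jm by auto
            moreover have "a \<le> w \<and> w < j1" using w False a j1 jm by auto
            ultimately show False using w(5) by blast
          qed
        qed
      qed
    qed
    then show ?thesis using del_irr[OF og N, of "Suc m"] by auto
  qed
qed

lemma all_sizes:
  assumes "ord_graph H" "irreducible_og H" "j \<le> fst H"
  shows "\<exists>K\<in>induced_subs H j. irreducible_og K"
proof -
  have "\<forall>H. ord_graph H \<and> irreducible_og H \<and> fst H = j + d \<longrightarrow> (\<exists>K\<in>induced_subs H j. irreducible_og K)" for d
  proof (induction d)
    case 0
    then show ?case using subs_refl by fastforce
  next
    case (Suc d)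
    show ?case
    proof (intro allI impI)
      fix H assume H: "ord_graph H \<and> irreducible_og H \<and> fst H = j + Suc d"
      then obtain K1 where K1: "K1 \<in> induced_subs H (j + d)" "irreducible_og K1"
        using del_lemma[of H "j + d"] by auto
      have "ord_graph K1" "fst K1 = j + d" using subs_ord[OF K1(1)] by auto
      then obtain K where "K \<in> induced_subs K1 j" "irreducible_og K" using Suc.IH K1(2) by blast
      then show "\<exists>K\<in>induced_subs H j. irreducible_og K" using subs_trans[OF K1(1)] by blast
    qed
  qed
  then show ?thesis using assms by (metis le_add_diff_inverse)
qed

lemma osum_emb:
  assumes og1: "ord_graph G1" and og2: "ord_graph G2"
    and P: "P \<in> induced_subs G1 j" and Y: "Y \<in> induced_subs G2 l"
  shows "osum P Y \<in> induced_subs (osum G1 G2) (j + l)"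
proof -
  obtain f1 where f1: "okf (fst G1) f1 j" "P = emb G1 f1 j" using P subs_char by blast
  obtain f2 where f2: "okf (fst G2) f2 l" "Y = emb G2 f2 l" using Y subs_char by blast
  define N1 where "N1 = fst G1"
  define f where "f a = (if a \<le> j then f1 a else f2 (a - j) + N1)" for a
  have ok: "okf (fst (osum G1 G2)) f (j + l)"
    unfolding okf_def
  proof (rule conjI; intro allI impI)
    fix a b assume ab: "1 \<le> a" "a < b" "b \<le> j + l"
    show "f a < f b"
    proof (cases "b \<le> j")
      case True then show ?thesis using f1(1) ab unfolding okf_def f_def by auto
    next
      case bj: False
      show ?thesis
      proof (cases "a \<le> j")
        case True
        have "f1 a \<le> N1" using f1(1) ab True unfolding okf_def N1_def by auto
        moreover have "1 \<le> f2 (b - j)" using f2(1) ab bj unfolding okf_def by auto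
        ultimately show ?thesis using True bj unfolding f_def by auto
      next
        case False
        have "1 \<le> a - j" "a - j < b - j" "b - j \<le> l" using ab False bj by arith+
        then have "f2 (a - j) < f2 (b - j)" using f2(1) unfolding okf_def by blast
        then show ?thesis using False bj unfolding f_def by auto
      qed
    qed
  next
    fix a assume a: "1 \<le> a" "a \<le> j + l"
    show "1 \<le> f a \<and> f a \<le> fst (osum G1 G2)"
    proof (cases "a \<le> j")
      case True then show ?thesis using f1(1) a unfolding okf_def f_def osum_def N1_def by auto
    next
      case False
      have "1 \<le> f2 (a - j) \<and> f2 (a - j) \<le> fst G2" using f2(1) a False unfolding okf_def by auto
      then show ?thesis using False unfolding f_def osum_def N1_def by auto
    qed
  qed
  have e1: "1 \<le> x \<and> x < y \<and> y \<le> N1" if "(x,y) \<in> snd G1" for x y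
    using that og1 unfolding ord_graph_def N1_def by auto
  have e2: "1 \<le> x \<and> x < y" if "(x,y) \<in> snd G2" for x y
    using that og2 unfolding ord_graph_def by auto
  have f1r: "1 \<le> f1 a \<and> f1 a \<le> N1" if "1 \<le> a" "a \<le> j" for a
    using f1(1) that unfolding okf_def N1_def by auto
  have f2r: "1 \<le> f2 a" if "1 \<le> a" "a \<le> l" for a
    using f2(1) that unfolding okf_def by auto
  have "snd (osum P Y) = snd (emb (osum G1 G2) f (j + l))"
  proof (rule set_eqI)
    fix x :: "nat \<times> nat"
    obtain a b where x: "x = (a,b)" by (cases x)
    show "x \<in> snd (osum P Y) \<longleftrightarrow> x \<in> snd (emb (osum G1 G2) f (j + l))"
    proof (cases "b \<le> j")
      case True
      then show ?thesis unfolding x f1(2) f2(2) osum_def emb_def f_def N1_def[symmetric]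
        using f1r[of a] f1r[of b] by (auto dest: e2)
    next
      case bj: False
      show ?thesis
      proof (cases "a \<le> j")
        case True
        have "(a,b) \<notin> snd (osum P Y)"
          unfolding f1(2) f2(2) osum_def emb_def using True bj by auto
        moreover have "(a,b) \<notin> snd (emb (osum G1 G2) f (j + l))"
        proof
          assume "(a,b) \<in> snd (emb (osum G1 G2) f (j + l))"
          then have ab: "1 \<le> a" "b \<le> j + l" "(f1 a, f2 (b - j) + N1) \<in> snd G1 \<union>
              {(i + N1, i' + N1) | i i'. (i, i') \<in> snd G2}"
            unfolding emb_def osum_def f_def N1_def using True bj by auto
          have "1 \<le> f2 (b - j)" using f2r ab bj by auto
          moreover have "f1 a \<le> N1" using f1r ab True by auto
          ultimately show False using ab(3) e1[of "f1 a" "f2 (b - j) + N1"] e2[of 0 "f2 (b - j)"] e2 by auto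
        qed
        ultimately show ?thesis using x by simp
      next
        case False
        have "(a,b) \<in> snd (osum P Y) \<longleftrightarrow> (a - j, b - j) \<in> snd Y"
        proof
          assume "(a,b) \<in> snd (osum P Y)"
          then have "(a,b) \<in> {(i + j, i' + j) | i i'. (i, i') \<in> snd Y}"
            unfolding osum_def f1(2) emb_def using False by auto
          then show "(a - j, b - j) \<in> snd Y" by auto
        next
          assume "(a - j, b - j) \<in> snd Y"
          moreover have "(a, b) = (a - j + j, b - j + j)" using False bj by auto
          ultimately have "(a,b) \<in> {(i + j, i' + j) | i i'. (i, i') \<in> snd Y}" by blast
          then show "(a,b) \<in> snd (osum P Y)" unfolding osum_def f1(2) by simp
        qed
        also have "\<dots> \<longleftrightarrow> (a,b) \<in> snd (emb (osum G1 G2) f (j + l))"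
          unfolding f2(2) osum_def emb_def f_def N1_def[symmetric] using False bj by (auto dest: e1)
        finally show ?thesis using x by simp
      qed
    qed
  qed
  moreover have "fst (osum P Y) = fst (emb (osum G1 G2) f (j + l))"
    using f1(2) f2(2) by (simp add: osum_def)
  ultimately have "osum P Y = emb (osum G1 G2) f (j + l)" by (simp add: prod_eq_iff)
  then show ?thesis using ok subs_char by blast
qed

lemma osum_fst_le:
  assumes "ord_graph P'" "ord_graph Y'" "irreducible_og P" "1 \<le> fst P'"
    and eq: "osum P Y = osum P' Y'"
  shows "fst P \<le> fst P'"
proof (rule ccontr)
  assume "\<not> ?thesis"
  then have "1 \<le> fst P' \<and> fst P' < fst P" using assms by auto
  then obtain i j where ij: "(i,j) \<in> snd P" "i \<le> fst P'" "fst P' < j"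
    using assms(3) unfolding irr_char by blast
  then have "(i,j) \<in> snd (osum P' Y')" using eq unfolding osum_def by auto
  then have "(i,j) \<in> snd P' \<or> (\<exists>i0 j0. (i0,j0) \<in> snd Y' \<and> i = i0 + fst P' \<and> j = j0 + fst P')"
    unfolding osum_def by auto
  then show False
  proof
    assume "(i,j) \<in> snd P'" then show False using assms(1) ij unfolding ord_graph_def by auto
  next
    assume "\<exists>i0 j0. (i0,j0) \<in> snd Y' \<and> i = i0 + fst P' \<and> j = j0 + fst P'"
    then obtain i0 j0 where "(i0,j0) \<in> snd Y'" "i = i0 + fst P'" by blast
    then show False using assms(2) ij unfolding ord_graph_def by auto
  qed
qed

lemma osum_inj:
  assumes og: "ord_graph P" "ord_graph P'" "ord_graph Y" "ord_graph Y'"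
    and irr: "irreducible_og P" "irreducible_og P'" and pos: "1 \<le> fst P" "1 \<le> fst P'"
    and eq: "osum P Y = osum P' Y'"
  shows "P = P' \<and> Y = Y'"
proof -
  have p: "fst P = fst P'"
    using osum_fst_le[OF og(2,4) irr(1) pos(2) eq] osum_fst_le[OF og(1,3) irr(2) pos(1) eq[symmetric]]
    by simp
  define p0 where "p0 = fst P"
  have sP: "snd P = {e \<in> snd (osum P Y). snd e \<le> p0}"
    if "ord_graph P" "ord_graph Y" "fst P = p0" for P Y
    using that unfolding osum_def ord_graph_def by auto
  have sP': "snd P = snd P'"
    using sP[OF og(1,3)] sP[OF og(2,4)] p eq p0_def by simp
  have PP: "P = P'" using sP' p by (simp add: prod_eq_iff)
  have sh: "{(i + p0, j + p0) | i j. (i, j) \<in> snd Y} = {(i + p0, j + p0) | i j. (i, j) \<in> snd Y'}"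
  proof -
    have d: "{(i + p0, j + p0) | i j. (i, j) \<in> snd Y} = snd (osum P Y) - snd P"
      if "ord_graph P" "ord_graph Y" "fst P = p0" for P Y
      using that unfolding osum_def ord_graph_def by auto
    show ?thesis using d[OF og(1,3)] d[OF og(2,4)] p p0_def eq PP by simp
  qed
  have "snd Y = snd Y'"
  proof (rule set_eqI)
    fix x :: "nat \<times> nat"
    obtain a b where x: "x = (a,b)" by (cases x)
    have shf: "(a + p0, b + p0) \<in> {(i + p0, j + p0) | i j. (i, j) \<in> snd Y} \<longleftrightarrow> (a,b) \<in> snd Y" for Y
    proof
      assume "(a + p0, b + p0) \<in> {(i + p0, j + p0) | i j. (i, j) \<in> snd Y}"
      then obtain i j where "(a + p0, b + p0) = (i + p0, j + p0)" "(i, j) \<in> snd Y" by blast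
      then show "(a,b) \<in> snd Y" by simp
    qed blast
    show "x \<in> snd Y \<longleftrightarrow> x \<in> snd Y'" using shf[of Y] shf[of Y'] sh x by simp
  qed
  moreover have "fst Y = fst Y'" using eq p unfolding osum_def by simp
  ultimately show ?thesis using PP by (simp add: prod_eq_iff)
qed

lemma finite_subs: "finite (induced_subs G m)"
proof -
  have "induced_subs G m \<subseteq> induced_sub G ` Pow {1..fst G}"
    unfolding induced_subs_def by blast
  then show ?thesis by (rule finite_subset) simp
qed

lemma subs0: "induced_subs G 0 = {(0, {})}"
proof -
  have "induced_sub G {} = (0, {})" unfolding induced_sub_def by auto
  moreover have "S \<subseteq> {1..fst G} \<and> card S = 0 \<longleftrightarrow> S = {}" for S
    using finite_subset[of S "{1..fst G}"] by auto
  ultimately show ?thesis unfolding induced_subs_def by auto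
qed

lemma osum_ord: "ord_graph G \<Longrightarrow> ord_graph H \<Longrightarrow> ord_graph (osum G H)"
  unfolding ord_graph_def osum_def by auto

lemma osum_list_Cons: "osum_list (G # Gs) = osum G (osum_list Gs)"
  by (simp add: osum_list_def)

lemma osum_list_ord: "\<forall>G\<in>set Gs. ord_graph G \<Longrightarrow> ord_graph (osum_list Gs)"
proof (induction Gs)
  case Nil then show ?case by (simp add: osum_list_def ord_graph_def)
next
  case (Cons G Gs) then show ?case by (simp add: osum_list_Cons osum_ord)
qed

lemma geo1: "r < n \<Longrightarrow> (\<Sum>j=1..r. (2::nat) ^ (n - j - 1)) + 2 ^ (n - r - 1) = 2 ^ (n - 1)"
proof (induction r)
  case 0 then show ?case by simp
next
  case (Suc r)
  have e: "n - r - 1 = Suc (n - Suc r - 1)" using Suc.prems by auto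
  have "(\<Sum>j=1..Suc r. (2::nat) ^ (n - j - 1)) + 2 ^ (n - Suc r - 1)
      = (\<Sum>j=1..r. (2::nat) ^ (n - j - 1)) + 2 ^ (n - Suc r - 1) + 2 ^ (n - Suc r - 1)"
    by simp
  also have "\<dots> = (\<Sum>j=1..r. (2::nat) ^ (n - j - 1)) + 2 ^ (n - r - 1)"
    unfolding e by simp
  also have "\<dots> = 2 ^ (n - 1)" using Suc by simp
  finally show ?case .
qed

lemma geo2: "1 \<le> n \<Longrightarrow> (\<Sum>j=1..n. (2::nat) ^ (n - j - 1)) = 2 ^ (n - 1)"
proof -
  assume n: "1 \<le> n"
  then obtain r where r: "n = Suc r" by (cases n) auto
  have "(\<Sum>j=1..n. (2::nat) ^ (n - j - 1)) = (\<Sum>j=1..r. (2::nat) ^ (n - j - 1)) + 2 ^ (n - r - 1)"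
    using r by simp
  also have "\<dots> = 2 ^ (n - 1)" using geo1[of r n] r by simp
  finally show ?thesis .
qed

lemma arith_main:
  fixes c t :: "nat \<Rightarrow> nat"
  assumes n: "1 \<le> n" and m: "1 \<le> m" and c1: "\<forall>j. 1 \<le> j \<and> j \<le> m \<longrightarrow> 1 \<le> c j"
    and c2: "2 \<le> c m" and t: "\<forall>i<n. 2 ^ (i - 1) \<le> t i"
  shows "2 ^ (n - 1) \<le> (\<Sum>j=1..min m n. c j * t (n - j))"
proof -
  have "(\<Sum>j=1..min m n. c j * 2 ^ (n - j - 1)) \<le> (\<Sum>j=1..min m n. c j * t (n - j))"
  proof (rule sum_mono)
    fix j assume "j \<in> {1..min m n}"
    then have "n - j < n" by auto
    then have "2 ^ (n - j - 1) \<le> t (n - j)" using t by auto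
    then show "c j * 2 ^ (n - j - 1) \<le> c j * t (n - j)" by simp
  qed
  moreover have "2 ^ (n - 1) \<le> (\<Sum>j=1..min m n. c j * (2::nat) ^ (n - j - 1))"
  proof (cases "n \<le> m")
    case True
    have "(\<Sum>j=1..n. (2::nat) ^ (n - j - 1)) \<le> (\<Sum>j=1..n. c j * (2::nat) ^ (n - j - 1))"
      by (rule sum_mono) (use c1 True in auto)
    then show ?thesis using geo2[OF n] True by (simp add: min_def)
  next
    case False
    obtain r where r: "m = Suc r" using m by (cases m) auto
    have "(\<Sum>j=1..r. (2::nat) ^ (n - j - 1)) \<le> (\<Sum>j=1..r. c j * (2::nat) ^ (n - j - 1))"
      by (rule sum_mono) (use c1 r in auto)
    moreover have "2 * 2 ^ (n - m - 1) \<le> c m * (2::nat) ^ (n - m - 1)" using c2 by simp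
    moreover have "(\<Sum>j=1..m. (2::nat) ^ (n - j - 1)) = (\<Sum>j=1..r. (2::nat) ^ (n - j - 1)) + 2 ^ (n - m - 1)"
      using r by simp
    moreover have "(\<Sum>j=1..m. c j * (2::nat) ^ (n - j - 1)) = (\<Sum>j=1..r. c j * (2::nat) ^ (n - j - 1)) + c m * 2 ^ (n - m - 1)"
      using r by simp
    ultimately have "(\<Sum>j=1..m. (2::nat) ^ (n - j - 1)) + 2 ^ (n - m - 1)
        \<le> (\<Sum>j=1..m. c j * (2::nat) ^ (n - j - 1))" by linarith
    then show ?thesis using geo1[of m n] False by (simp add: min_def)
  qed
  ultimately show ?thesis by linarith
qed

definition irrs :: "ograph \<Rightarrow> nat \<Rightarrow> ograph set" where
  "irrs G j = {P \<in> induced_subs G j. irreducible_og P}"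

lemma step:
  assumes og1: "ord_graph G1" and og2: "ord_graph G2" and n: "1 \<le> n" and m: "1 \<le> m"
    and c1: "\<forall>j. 1 \<le> j \<and> j \<le> m \<longrightarrow> 1 \<le> card (irrs G1 j)"
    and c2: "2 \<le> card (irrs G1 m)"
    and t: "\<forall>i<n. 2 ^ (i - 1) \<le> card (induced_subs G2 i)"
  shows "2 ^ (n - 1) \<le> card (induced_subs (osum G1 G2) n)"
proof -
  define D where "D = (\<Union>j\<in>{1..min m n}. irrs G1 j \<times> induced_subs G2 (n - j))"
  have finI: "finite (irrs G1 j)" for j unfolding irrs_def using finite_subs by simp
  have cardD: "card D = (\<Sum>j=1..min m n. card (irrs G1 j) * card (induced_subs G2 (n - j)))"
    unfolding D_def
  proof (subst card_UN_disjoint)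
    show "finite {1..min m n}" by simp
    show "\<forall>j\<in>{1..min m n}. finite (irrs G1 j \<times> induced_subs G2 (n - j))"
      using finI finite_subs by simp
    show "\<forall>i\<in>{1..min m n}. \<forall>j\<in>{1..min m n}. i \<noteq> j \<longrightarrow>
        (irrs G1 i \<times> induced_subs G2 (n - i)) \<inter> (irrs G1 j \<times> induced_subs G2 (n - j)) = {}"
      unfolding irrs_def using subs_ord by blast
  qed (simp add: card_cartesian_product)
  have inj: "inj_on (\<lambda>(P,Y). osum P Y) D"
  proof (rule inj_onI, clarify)
    fix P Y P' Y' assume a: "(P,Y) \<in> D" "(P',Y') \<in> D" "osum P Y = osum P' Y'"
    obtain j where j: "j \<in> {1..min m n}" "P \<in> irrs G1 j" "Y \<in> induced_subs G2 (n - j)"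
      using a(1) unfolding D_def by blast
    obtain j' where j': "j' \<in> {1..min m n}" "P' \<in> irrs G1 j'" "Y' \<in> induced_subs G2 (n - j')"
      using a(2) unfolding D_def by blast
    have "ord_graph P" "fst P = j" "irreducible_og P" using j(2) subs_ord[of P G1 j] unfolding irrs_def by auto
    moreover have "ord_graph P'" "fst P' = j'" "irreducible_og P'" using j'(2) subs_ord[of P' G1 j'] unfolding irrs_def by auto
    moreover have "ord_graph Y" "ord_graph Y'" using j(3) j'(3) subs_ord by auto
    ultimately show "P = P' \<and> Y = Y'" using osum_inj[of P P' Y Y'] a(3) j(1) j'(1) by auto
  qed
  have img': "osum P Y \<in> induced_subs (osum G1 G2) n" if "(P,Y) \<in> D" for P Y
  proof -
    from that obtain j where j: "j \<in> {1..min m n}" "P \<in> induced_subs G1 j" "Y \<in> induced_subs G2 (n - j)"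
      unfolding D_def irrs_def by blast
    then have "osum P Y \<in> induced_subs (osum G1 G2) (j + (n - j))" using osum_emb og1 og2 by blast
    then show "osum P Y \<in> induced_subs (osum G1 G2) n" using j(1) by simp
  qed
  have img: "(\<lambda>(P,Y). osum P Y) ` D \<subseteq> induced_subs (osum G1 G2) n"
    using img' by auto
  have "card D \<le> card (induced_subs (osum G1 G2) n)"
    using card_inj_on_le[OF inj img finite_subs] .
  moreover have "2 ^ (n - 1) \<le> card D"
    unfolding cardD
    by (rule arith_main[where c="\<lambda>j. card (irrs G1 j)" and t="\<lambda>i. card (induced_subs G2 i)", OF n m c1 c2 t])
  ultimately show ?thesis by linarith
qed

lemma main_nat:
  "(\<forall>G\<in>set Gs. ord_graph G \<and> (\<exists>m. \<exists>H1 H2. H1 \<in> induced_subs G m \<and>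
                    H2 \<in> induced_subs G m \<and> H1 \<noteq> H2 \<and>
                    irreducible_og H1 \<and> irreducible_og H2))
   \<Longrightarrow> \<forall>n \<le> length Gs. 2 ^ (n - 1) \<le> card (induced_subs (osum_list Gs) n)"
proof (induction Gs)
  case Nil then show ?case by (simp add: subs0)
next
  case (Cons G Gs)
  have IH: "\<forall>n \<le> length Gs. 2 ^ (n - 1) \<le> card (induced_subs (osum_list Gs) n)"
    using Cons by simp
  have ogG: "ord_graph G" using Cons.prems by simp
  obtain m H1 H2 where H: "H1 \<in> induced_subs G m" "H2 \<in> induced_subs G m" "H1 \<noteq> H2"
    "irreducible_og H1" "irreducible_og H2"
  proof -
    have "\<exists>m. \<exists>H1 H2. H1 \<in> induced_subs G m \<and>
                    H2 \<in> induced_subs G m \<and> H1 \<noteq> H2 \<and>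
                    irreducible_og H1 \<and> irreducible_og H2" using Cons.prems by simp
    then show ?thesis using that by blast
  qed
  have og2: "ord_graph (osum_list Gs)" using Cons.prems osum_list_ord by simp
  have m: "1 \<le> m"
  proof (rule ccontr)
    assume "\<not> 1 \<le> m" then have "m = 0" by simp
    then have "H1 = (0, {})" "H2 = (0, {})" using H(1,2) subs0[of G] by auto
    then show False using H(3) by simp
  qed
  have c2: "2 \<le> card (irrs G m)"
  proof -
    have "{H1, H2} \<subseteq> irrs G m" using H unfolding irrs_def by auto
    then have "card {H1, H2} \<le> card (irrs G m)"
      by (rule card_mono[rotated]) (simp add: irrs_def finite_subs)
    then show ?thesis using H(3) by simp
  qed
  have c1: "\<forall>j. 1 \<le> j \<and> j \<le> m \<longrightarrow> 1 \<le> card (irrs G j)"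
  proof (intro allI impI)
    fix j assume j: "1 \<le> j \<and> j \<le> m"
    have "ord_graph H1" "fst H1 = m" using subs_ord[OF H(1)] by auto
    then obtain K where K: "K \<in> induced_subs H1 j" "irreducible_og K"
      using all_sizes[of H1 j] H(4) j by auto
    then have "K \<in> irrs G j" using subs_trans[OF H(1)] unfolding irrs_def by blast
    moreover have "finite (irrs G j)" by (simp add: irrs_def finite_subs)
    ultimately show "1 \<le> card (irrs G j)"
      by (metis One_nat_def Suc_leI card_gt_0_iff empty_iff)
  qed
  show ?case
  proof (intro allI impI)
    fix n assume n: "n \<le> length (G # Gs)"
    show "2 ^ (n - 1) \<le> card (induced_subs (osum_list (G # Gs)) n)"
    proof (cases "n = 0")
      case True then show ?thesis by (simp add: subs0)
    next
      case False
      have t: "\<forall>i<n. 2 ^ (i - 1) \<le> card (induced_subs (osum_list Gs) i)"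
        using IH n by auto
      show ?thesis unfolding osum_list_Cons
        using step[OF ogG og2 _ m c1 c2 t] False by simp
    qed
  qed
qed

theorem lemma17:
  fixes k :: nat and Gs :: "ograph list"
  assumes len: "length Gs = k"
    and wf: "\<forall>i < k. ord_graph (Gs ! i)"
    and two_irr: "\<forall>i < k. \<exists>m. \<exists>H1 H2. H1 \<in> induced_subs (Gs ! i) m \<and>
                    H2 \<in> induced_subs (Gs ! i) m \<and> H1 \<noteq> H2 \<and>
                    irreducible_og H1 \<and> irreducible_og H2"
  shows "\<forall>n \<le> k. real (S_num n (osum_list Gs)) \<ge> 2 powr (real n - 1)"
proof (intro allI impI)
  fix n assume n: "n \<le> k"
  have "\<forall>G\<in>set Gs. ord_graph G \<and> (\<exists>m. \<exists>H1 H2. H1 \<in> induced_subs G m \<and>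
                    H2 \<in> induced_subs G m \<and> H1 \<noteq> H2 \<and>
                    irreducible_og H1 \<and> irreducible_og H2)"
  proof
    fix G assume "G \<in> set Gs"
    then obtain i where i: "i < k" "G = Gs ! i" using len by (auto simp: in_set_conv_nth)
    show "ord_graph G \<and> (\<exists>m. \<exists>H1 H2. H1 \<in> induced_subs G m \<and>
                    H2 \<in> induced_subs G m \<and> H1 \<noteq> H2 \<and>
                    irreducible_og H1 \<and> irreducible_og H2)"
      unfolding i(2) using wf two_irr i(1) by blast
  qed
  then have c: "2 ^ (n - 1) \<le> card (induced_subs (osum_list Gs) n)"
    using main_nat n len by blast
  show "real (S_num n (osum_list Gs)) \<ge> 2 powr (real n - 1)"
  proof (cases "n = 0")
    case True
    then have "1 \<le> S_num n (osum_list Gs)" using c unfolding S_num_def by simp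
    moreover have "2 powr (real n - 1) = 1 / 2" using True by (simp add: powr_minus_divide)
    ultimately show ?thesis by simp
  next
    case False
    have "2 powr (real n - 1) = 2 powr (real (n - 1))" using False by (simp add: of_nat_diff)
    also have "\<dots> = 2 ^ (n - 1)" by (simp add: powr_realpow)
    finally show ?thesis using c unfolding S_num_def
      by (metis of_nat_le_iff of_nat_numeral of_nat_power)
  qed
qed

end
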